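(* Let $W=x_1^{a_1}x_2+x_2^{a_2}x_3+\dots+x_{N-1}^{a_{N-1}}x_N+x_N^{a_N}$ be a chain with all $a_i\ge2$ and $a_N>2$. For $1\le i\le N$ and an integer $c\in[-2,2]$ put $Y_{i,c}=q_i+c\,\rho^{(i)}_N$. Then $Y_{i,c}\in(0,1)$ except in the following cases: $Y_{N,-2}\in(-1,0)$; $Y_{N,-1}=0$; and, when $a_N=3$, $Y_{N-1,2}=0$ and $Y_{N,2}=1$.
   Context: $q_i$ is the weight of $x_i$ in $W$ and $\rho^{(i)}_j$ is the $(i,j)$ entry of $E_W^{-1}$, where $E_W$ is the exponent matrix (upper bidiagonal with diagonal $a_1,\dots,a_N$ and superdiagonal entries $1$). Explicitly $\rho^{(i)}_j=(-1)^{j-i}\prod_{k=i}^j a_k^{-1}$ for $j\ge i$, $0$ for $j<i$, and $q_i=\sum_{j=i}^N(-1)^{j-i}\prod_{k=i}^ja_k^{-1}$. *)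

theory Defs
  imports Complex_Main
begin

text \<open>Chain polynomial with exponents a 1, ..., a N.
  rho a i j is the (i,j) entry of the inverse exponent matrix,
  q a N i is the weight of x_i, Y a N i c = q_i + c * rho^(i)_N.\<close>

definition rho :: "(nat \<Rightarrow> nat) \<Rightarrow> nat \<Rightarrow> nat \<Rightarrow> real" where
  "rho a i j = (if i \<le> j then (-1) ^ (j - i) * (\<Prod>k\<in>{i..j}. 1 / real (a k)) else 0)"

definition wt :: "(nat \<Rightarrow> nat) \<Rightarrow> nat \<Rightarrow> nat \<Rightarrow> real" where
  "wt a N i = (\<Sum>j\<in>{i..N}. rho a i j)"

definition Y :: "(nat \<Rightarrow> nat) \<Rightarrow> nat \<Rightarrow> nat \<Rightarrow> int \<Rightarrow> real" where
  "Y a N i c = wt a N i + real_of_int c * rho a i N"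

end

theory Submission
  imports Defs
begin

lemma rho_NN: "rho a N N = 1 / real (a N)"
  by (simp add: rho_def)

lemma rho_step:
  assumes "i < j"
  shows "rho a i j = - (1 / real (a i)) * rho a (Suc i) j"
proof -
  have p: "(\<Prod>k\<in>{i..j}. 1 / real (a k)) = 1 / real (a i) * (\<Prod>k\<in>{Suc i..j}. 1 / real (a k))"
    using assms by (simp add: Icc_eq_insert_lb_nat)
  have e: "(-1::real) ^ (j - i) = - ((-1) ^ (j - Suc i))"
    using assms by (metis Suc_diff_Suc power_Suc mult_minus1)
  show ?thesis using assms unfolding rho_def p e by simp
qed

lemma wt_step:
  assumes "i < N"
  shows "wt a N i = (1 - wt a N (Suc i)) / real (a i)"
proof -
  have "wt a N i = rho a i i + (\<Sum>j\<in>{Suc i..N}. rho a i j)"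
    unfolding wt_def using assms by (simp add: Icc_eq_insert_lb_nat)
  also have "(\<Sum>j\<in>{Suc i..N}. rho a i j) = (\<Sum>j\<in>{Suc i..N}. - (1 / real (a i)) * rho a (Suc i) j)"
    by (rule sum.cong) (simp_all add: rho_step)
  also have "\<dots> = - (1 / real (a i)) * wt a N (Suc i)"
    unfolding wt_def by (simp add: sum_distrib_left)
  finally show ?thesis by (simp add: rho_def diff_divide_distrib)
qed

lemma Y_step:
  assumes "i < N"
  shows "Y a N i c = (1 - Y a N (Suc i) c) / real (a i)"
  unfolding Y_def wt_step[OF assms] rho_step[OF assms]
  by (simp add: field_simps diff_divide_distrib add_divide_distrib)

lemma Y_N: "Y a N N c = (1 + real_of_int c) / real (a N)"
  by (simp add: Y_def wt_def rho_def add_divide_distrib)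

lemma step_bound:
  assumes "i < N" "a i \<ge> 2" "-1 < Y a N (Suc i) c" "Y a N (Suc i) c < 1"
  shows "0 < Y a N i c \<and> Y a N i c < 1"
proof -
  have "real (a i) \<ge> 2" using assms by simp
  then show ?thesis using assms unfolding Y_step[OF assms(1)]
    by (auto simp: field_simps)
qed

lemma down:
  assumes "\<forall>k\<in>{1..N}. a k \<ge> 2" "m \<le> N" "-1 < Y a N m c" "Y a N m c < 1"
  shows "\<forall>i. 1 \<le> i \<and> i < m \<longrightarrow> 0 < Y a N i c \<and> Y a N i c < 1"
proof -
  have "\<forall>d. d \<le> m - 1 \<longrightarrow> -1 < Y a N (m - d) c \<and> Y a N (m - d) c < 1"
  proof (intro allI impI)
    fix d assume "d \<le> m - 1"
    then show "-1 < Y a N (m - d) c \<and> Y a N (m - d) c < 1"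
    proof (induction d)
      case 0 then show ?case using assms by simp
    next
      case (Suc d)
      then have l1: "m - Suc d < N" "Suc (m - Suc d) = m - d" using assms by auto
      have "m - Suc d \<in> {1..N}" using Suc.prems assms by auto
      then have l2: "a (m - Suc d) \<ge> 2" using assms(1) by blast
      have "-1 < Y a N (Suc (m - Suc d)) c \<and> Y a N (Suc (m - Suc d)) c < 1"
        using Suc l1 by simp
      then show ?case using step_bound[of "m - Suc d" N a c] l1 l2 by auto
    qed
  qed
  then show ?thesis
  proof (intro allI impI)
    fix i assume h: "\<forall>d\<le>m - 1. -1 < Y a N (m - d) c \<and> Y a N (m - d) c < 1" "1 \<le> i \<and> i < m"
    then have "-1 < Y a N (Suc i) c \<and> Y a N (Suc i) c < 1"
      using h(1)[rule_format, of "m - Suc i"] by (simp add: Suc_diff_Suc)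
    moreover have "i < N" "a i \<ge> 2" using h assms by auto
    ultimately show "0 < Y a N i c \<and> Y a N i c < 1" using step_bound by blast
  qed
qed

theorem lemma5p3:
  fixes a :: "nat \<Rightarrow> nat" and N :: nat
  assumes "N \<ge> 1"
    and "\<forall>k\<in>{1..N}. a k \<ge> 2"
    and "a N > 2"
  shows "(\<forall>i\<in>{1..N}. \<forall>c\<in>{-2..2::int}.
            \<not> (i = N \<and> c = -2) \<and> \<not> (i = N \<and> c = -1)
            \<and> \<not> (a N = 3 \<and> i + 1 = N \<and> c = 2) \<and> \<not> (a N = 3 \<and> i = N \<and> c = 2)
            \<longrightarrow> 0 < Y a N i c \<and> Y a N i c < 1)
       \<and> (-1 < Y a N N (-2) \<and> Y a N N (-2) < 0)
       \<and> Y a N N (-1) = 0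
       \<and> (a N = 3 \<longrightarrow> (N \<ge> 2 \<longrightarrow> Y a N (N - 1) 2 = 0) \<and> Y a N N 2 = 1)"
proof -
  have aN: "real (a N) \<ge> 3" using assms(3) by simp
  have YN: "\<And>c. Y a N N c = (1 + real_of_int c) / real (a N)" by (rule Y_N)
  have A: "-1 < Y a N N (-2) \<and> Y a N N (-2) < 0" using aN by (simp add: YN field_simps)
  have B: "Y a N N (-1) = 0" by (simp add: YN)
  have C: "a N = 3 \<longrightarrow> (N \<ge> 2 \<longrightarrow> Y a N (N - 1) 2 = 0) \<and> Y a N N 2 = 1"
  proof
    assume a3: "a N = 3"
    have "Y a N N 2 = 1" using a3 by (simp add: YN)
    moreover have "N \<ge> 2 \<longrightarrow> Y a N (N - 1) 2 = 0"
      using Y_step[of "N - 1" N a 2] \<open>Y a N N 2 = 1\<close> by auto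
    ultimately show "(N \<ge> 2 \<longrightarrow> Y a N (N - 1) 2 = 0) \<and> Y a N N 2 = 1" by simp
  qed
  have D: "0 < Y a N i c \<and> Y a N i c < 1"
    if i: "i \<in> {1..N}" and c: "c \<in> {-2..2::int}"
      and ex: "\<not> (i = N \<and> c = -2)" "\<not> (i = N \<and> c = -1)"
        "\<not> (a N = 3 \<and> i + 1 = N \<and> c = 2)" "\<not> (a N = 3 \<and> i = N \<and> c = 2)" for i c
  proof (cases "c = 2 \<and> a N = 3")
    case True
    then have yN: "Y a N N c = 1" by (simp add: YN)
    have iN: "i + 2 \<le> N" using True i ex by auto
    have y1: "Y a N (N - 1) c = 0" using Y_step[of "N - 1" N a c] yN iN by auto
    have y2: "Y a N (N - 2) c = 1 / real (a (N - 2))"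
      using Y_step[of "N - 2" N a c] y1 iN by (simp add: numeral_2_eq_2 Suc_diff_Suc)
    have "N - 2 \<in> {1..N}" using iN i by auto
    then have "a (N - 2) \<ge> 2" using assms(2) by blast
    then have y2b: "0 < Y a N (N - 2) c \<and> Y a N (N - 2) c < 1" 
    proof -
      have r: "real (a (N - 2)) \<ge> 2" using \<open>a (N - 2) \<ge> 2\<close> by simp
      have "0 < 1 / real (a (N - 2))" using r by simp
      moreover have "1 / real (a (N - 2)) < 1" using r by simp
      ultimately show ?thesis using y2 by linarith
    qed
    show ?thesis
    proof (cases "i = N - 2")
      case True
      then show ?thesis using y2b by auto
    next
      case False
      then show ?thesis using down[OF assms(2), of "N - 2" c] y2b i iN by auto
    qed
  next
    case False
    have yNb: "-1 < Y a N N c \<and> Y a N N c < 1"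
    proof -
      have "c \<le> 1 \<or> a N \<ge> 4" using False c assms(3) by auto
      then show ?thesis using aN c by (auto simp: YN field_simps)
    qed
    show ?thesis
    proof (cases "i = N")
      case True
      then have "c \<ge> 0" using ex c by auto
      then have "0 < 1 + real_of_int c" by simp
      then have "0 < Y a N N c" unfolding YN using aN by simp
      then show ?thesis using True yNb by simp
    next
      case False
      then show ?thesis using down[OF assms(2), of N c] yNb i by auto
    qed
  qed
  show ?thesis using A B C D by blast
qed

end
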